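(* Let $A\subseteq B$ be a ring extension (commutative rings with identity). Then the following conditions are equivalent: (i) the extension $A\subseteq B$ has the finite character, i.e. every $B$-regular ideal of $A$ is contained in only finitely many maximal ideals of $A$; (ii) for any finitely generated $B$-regular ideal $\mathfrak a$ of $A$, every collection of pairwise comaximal, finitely generated, $B$-regular ideals of $A$ containing $\mathfrak a$ is finite.
   Context: An $A$-submodule $S$ of $B$ is called $B$-regular if $SB=B$. Two ideals $\mathfrak b_1,\mathfrak b_2$ of $A$ are comaximal if $\mathfrak b_1+\mathfrak b_2=A$ (equivalently, here, among proper $B$-regular ideals: no proper $B$-regular ideal contains both); a collection is pairwise comaximal if any two distinct members are comaximal. *)

theory Defs
  imports "HOL-Algebra.Algebra"
begin

text \<open>Ring extension A \<subseteq> B: B is a commutative ring R, A is a subring (carrier A) of R.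
  The ring A is the structure R with carrier restricted to A.\<close>

definition B_regular :: "('a, 'b) ring_scheme \<Rightarrow> 'a set \<Rightarrow> bool" where
  "B_regular R S \<longleftrightarrow> genideal R S = carrier R"

definition fin_gen_ideal :: "('a, 'b) ring_scheme \<Rightarrow> 'a set \<Rightarrow> bool" where
  "fin_gen_ideal R I \<longleftrightarrow> (\<exists>F. finite F \<and> F \<subseteq> carrier R \<and> I = genideal R F)"

definition comaximal :: "('a, 'b) ring_scheme \<Rightarrow> 'a set \<Rightarrow> 'a set \<Rightarrow> bool" where
  "comaximal R I J \<longleftrightarrow> I <+>\<^bsub>R\<^esub> J = carrier R"

definition finite_character :: "('a, 'b) ring_scheme \<Rightarrow> 'a set \<Rightarrow> bool" where
  "finite_character R A \<longleftrightarrow>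
     (\<forall>I. ideal I (R\<lparr>carrier := A\<rparr>) \<and> B_regular R I \<longrightarrow>
        finite {M. maximalideal M (R\<lparr>carrier := A\<rparr>) \<and> I \<subseteq> M})"

end

theory Submission
  imports Defs
begin

lemma ideal_sub: assumes "ideal I R" shows "I \<subseteq> carrier R"
  using ideal.Icarr[OF assms] by blast

lemma (in ring) directed_union_ideal:
  assumes ne: "XX \<noteq> {}" and id: "\<And>U. U \<in> XX \<Longrightarrow> ideal U R"
    and dir: "\<And>U V. U \<in> XX \<Longrightarrow> V \<in> XX \<Longrightarrow> \<exists>W\<in>XX. U \<subseteq> W \<and> V \<subseteq> W"
  shows "ideal (\<Union>XX) R"
proof (rule idealI)
  show "ring R" by (rule ring_axioms)
  show "subgroup (\<Union>XX) (add_monoid R)"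
  proof (rule subgroup.intro)
    show "\<Union>XX \<subseteq> carrier (add_monoid R)"
    proof
      fix x assume "x \<in> \<Union>XX"
      then obtain U where U: "U \<in> XX" "x \<in> U" by (rule UnionE)
      then show "x \<in> carrier (add_monoid R)" using ideal.Icarr[OF id[OF U(1)] U(2)] by simp
    qed
  next
    fix x y assume "x \<in> \<Union>XX" "y \<in> \<Union>XX"
    then obtain U V where U: "U \<in> XX" "x \<in> U" and V: "V \<in> XX" "y \<in> V" by (meson UnionE)
    obtain W where W: "W \<in> XX" "U \<subseteq> W" "V \<subseteq> W" using dir[OF U(1) V(1)] by (rule bexE) simp
    have "x \<in> W" "y \<in> W" using U V W by (simp_all add: subsetD)
    then have "x \<oplus> y \<in> W" by (rule additive_subgroup.a_closed[OF ideal.axioms(1)[OF id[OF W(1)]]])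
    then show "x \<otimes>\<^bsub>add_monoid R\<^esub> y \<in> \<Union>XX" using W(1) by (simp; blast)
  next
    obtain U where U: "U \<in> XX" using ne by blast
    have "\<zero> \<in> U" by (rule additive_subgroup.zero_closed[OF ideal.axioms(1)[OF id[OF U]]])
    then show "\<one>\<^bsub>add_monoid R\<^esub> \<in> \<Union>XX" using U by (simp; blast)
  next
    fix x assume "x \<in> \<Union>XX"
    then obtain U where U: "U \<in> XX" "x \<in> U" by (rule UnionE)
    have "\<ominus> x \<in> U" by (rule additive_subgroup.a_inv_closed[OF ideal.axioms(1)[OF id[OF U(1)]] U(2)])
    then show "inv\<^bsub>add_monoid R\<^esub> x \<in> \<Union>XX" using U(1) by (simp add: a_inv_def[symmetric]; blast)
  qed
next
  fix a x assume "a \<in> \<Union>XX" "x \<in> carrier R"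
  then obtain U where U: "U \<in> XX" "a \<in> U" by (meson UnionE)
  have "x \<otimes> a \<in> U" by (rule ideal.I_l_closed[OF id[OF U(1)] U(2) \<open>x \<in> carrier R\<close>])
  then show "x \<otimes> a \<in> \<Union>XX" using U(1) by (rule UnionI[rotated])
  have "a \<otimes> x \<in> U" by (rule ideal.I_r_closed[OF id[OF U(1)] U(2) \<open>x \<in> carrier R\<close>])
  then show "a \<otimes> x \<in> \<Union>XX" using U(1) by (rule UnionI[rotated])
qed

lemma (in ring) exists_maximal:
  assumes "ideal I R" "I \<noteq> carrier R"
  shows "\<exists>M. maximalideal M R \<and> I \<subseteq> M"
proof -
  let ?A = "{J. ideal J R \<and> I \<subseteq> J \<and> \<one> \<notin> J}"
  have "\<one> \<notin> I" using assms ideal.one_imp_carrier by blast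
  then have ne: "?A \<noteq> {}" using assms by blast
  have "\<exists>M\<in>?A. \<forall>U\<in>?A. M \<subseteq> U \<longrightarrow> U = M"
  proof (rule subset_Zorn_nonempty[OF ne])
    fix C assume C: "C \<noteq> {}" "subset.chain ?A C"
    have CA: "C \<subseteq> ?A" using C(2) by (simp add: subset_chain_def)
    have tot: "\<forall>U\<in>C. \<forall>V\<in>C. U \<subseteq> V \<or> V \<subseteq> U" using C(2) by (simp add: subset_chain_def)
    have "ideal (\<Union>C) R"
    proof (rule directed_union_ideal)
      show "C \<noteq> {}" by (rule C(1))
      show "\<And>U. U \<in> C \<Longrightarrow> ideal U R" using CA by blast
      fix U V assume UV: "U \<in> C" "V \<in> C"
      then have "U \<subseteq> V \<or> V \<subseteq> U" using tot by blast
      then show "\<exists>W\<in>C. U \<subseteq> W \<and> V \<subseteq> W" using UV by blast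
    qed
    moreover obtain U where "U \<in> C" using C(1) by blast
    then have "I \<subseteq> \<Union>C" using CA by blast
    moreover have "\<one> \<notin> \<Union>C" using CA by blast
    ultimately show "\<Union>C \<in> ?A" by blast
  qed
  then obtain M where M: "M \<in> ?A" and Mmax: "\<forall>U\<in>?A. M \<subseteq> U \<longrightarrow> U = M" by (rule bexE)
  have "maximalideal M R"
  proof (rule maximalidealI)
    show "ideal M R" using M by simp
    show "carrier R \<noteq> M" using M one_closed by auto
    fix J assume J: "ideal J R" "M \<subseteq> J" "J \<subseteq> carrier R"
    show "J = M \<or> J = carrier R"
    proof (cases "\<one> \<in> J")
      case True then show ?thesis using J ideal.one_imp_carrier by blast
    next
      case False
      then have "J \<in> ?A" using J M by (simp, blast)
      then have "J = M" using Mmax J(2) by simp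
      then show ?thesis by simp
    qed
  qed
  then show ?thesis using M by blast
qed

lemma (in ring) comax_elem:
  assumes "maximalideal M R" "ideal J R" "\<not> J \<subseteq> M"
  shows "\<exists>j\<in>J. \<exists>m\<in>M. j \<oplus> m = \<one>"
proof -
  have MI: "ideal M R" using maximalideal.axioms(1)[OF assms(1)] .
  have S: "ideal (J <+> M) R" by (rule add_ideals[OF assms(2) MI])
  have sub: "M \<subseteq> J <+> M"
  proof
    fix m assume "m \<in> M"
    moreover have "\<zero> \<in> J" by (rule additive_subgroup.zero_closed[OF ideal.axioms(1)[OF assms(2)]])
    moreover have "\<zero> \<oplus> m = m" using ideal.Icarr[OF MI \<open>m \<in> M\<close>] by simp
    ultimately show "m \<in> J <+> M" unfolding set_add_def' by force
  qed
  obtain j where j: "j \<in> J" "j \<notin> M" using assms(3) by blast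
  have "\<zero> \<in> M" by (rule additive_subgroup.zero_closed[OF ideal.axioms(1)[OF MI]])
  moreover have "j \<oplus> \<zero> = j" using ideal.Icarr[OF assms(2) j(1)] by simp
  ultimately have "j \<in> J <+> M" using j unfolding set_add_def' by force
  then have ne: "J <+> M \<noteq> M" using j by blast
  have "J <+> M \<subseteq> carrier R" using ideal_sub[OF S] .
  then have "J <+> M = carrier R"
    using maximalideal.I_maximal[OF assms(1) S sub] ne by blast
  then have "\<one> \<in> J <+> M" by simp
  then obtain j m where "j \<in> J" "m \<in> M" "\<one> = j \<oplus> m" unfolding set_add_def' by blast
  then show ?thesis by metis
qed


lemma (in ring) genideal_finite_elem:
  assumes "S \<subseteq> carrier R" "x \<in> Idl S"
  shows "\<exists>F. finite F \<and> F \<subseteq> S \<and> x \<in> Idl F"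
proof -
  let ?XX = "{Idl F | F. finite F \<and> F \<subseteq> S}"
  have id: "ideal (\<Union>?XX) R"
  proof (rule directed_union_ideal)
    show "?XX \<noteq> {}" by blast
    show "\<And>U. U \<in> ?XX \<Longrightarrow> ideal U R" using assms(1) genideal_ideal by blast
    fix U V assume "U \<in> ?XX" "V \<in> ?XX"
    then obtain F G where F: "finite F" "F \<subseteq> S" "U = Idl F" and G: "finite G" "G \<subseteq> S" "V = Idl G"
      by blast
    have FGc: "F \<union> G \<subseteq> carrier R" using F G assms(1) by blast
    have "Idl F \<subseteq> Idl (F \<union> G)" "Idl G \<subseteq> Idl (F \<union> G)"
      by (rule subset_Idl_subset[OF FGc]; blast)+
    moreover have "Idl (F \<union> G) \<in> ?XX" using F G by blast
    ultimately show "\<exists>W\<in>?XX. U \<subseteq> W \<and> V \<subseteq> W" using F G by blast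
  qed
  have "S \<subseteq> \<Union>?XX"
  proof
    fix s assume "s \<in> S"
    then have "s \<in> Idl {s}" using assms(1) genideal_self' by blast
    then show "s \<in> \<Union>?XX" using \<open>s \<in> S\<close> by blast
  qed
  then have "Idl S \<subseteq> \<Union>?XX" using genideal_minimal[OF id] by blast
  then show ?thesis using assms(2) by blast
qed

lemma (in cring) split_max:
  assumes "infinite S" "\<forall>M\<in>S. maximalideal M R"
  shows "\<exists>M\<in>S. \<exists>x\<in>M. infinite {M'\<in>S. x \<notin> M'}"
proof (rule ccontr)
  assume H: "\<not> ?thesis"
  obtain M1 where M1: "M1 \<in> S" using assms(1) infinite_imp_nonempty by blast
  have "infinite (S - {M1})" using assms(1) by simp
  then obtain M2 where M2: "M2 \<in> S" "M2 \<noteq> M1" using infinite_imp_nonempty by blast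
  have mx1: "maximalideal M1 R" and mx2: "maximalideal M2 R" using M1 M2 assms(2) by auto
  have I2: "ideal M2 R" using maximalideal.axioms(1)[OF mx2] .
  have I1: "ideal M1 R" using maximalideal.axioms(1)[OF mx1] .
  have "\<not> M1 \<subseteq> M2"
  proof
    assume "M1 \<subseteq> M2"
    moreover have "M2 \<subseteq> carrier R" using ideal_sub[OF I2] .
    ultimately have "M2 = M1 \<or> M2 = carrier R"
      using maximalideal.I_maximal[OF mx1 I2] by blast
    then show False using M2 maximalideal.I_notcarr[OF mx2] by metis
  qed
  then obtain j m where jm: "j \<in> M1" "m \<in> M2" "j \<oplus> m = \<one>"
    using comax_elem[OF mx2 I1] by blast
  have f1: "finite {M'\<in>S. j \<notin> M'}" using H M1 jm by blast
  have f2: "finite {M'\<in>S. m \<notin> M'}" using H M2 jm by blast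
  have "infinite (S - ({M'\<in>S. j \<notin> M'} \<union> {M'\<in>S. m \<notin> M'}))"
    using f1 f2 assms(1) by (simp add: Diff_infinite_finite)
  then obtain M' where M': "M' \<in> S" "j \<in> M'" "m \<in> M'"
    using infinite_imp_nonempty by blast
  have mx': "maximalideal M' R" using M' assms(2) by auto
  have I': "ideal M' R" using maximalideal.axioms(1)[OF mx'] .
  have "j \<oplus> m \<in> M'" using additive_subgroup.a_closed[OF ideal.axioms(1)[OF I'] M'(2,3)] .
  then have "M' = carrier R" using jm ideal.one_imp_carrier[OF I'] by simp
  then show False using maximalideal.I_notcarr[OF mx'] by metis
qed

lemma (in cring) step_lemma:
  assumes Fa: "Fa \<subseteq> carrier R"
    and C: "finite C" "pairwise (comaximal R) C"
       "\<forall>I\<in>C. \<exists>G. finite G \<and> G \<subseteq> carrier R \<and> I = Idl (Fa \<union> G)"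
    and S: "infinite S" "\<forall>M\<in>S. maximalideal M R \<and> Fa \<subseteq> M" "\<forall>I\<in>C. \<forall>M\<in>S. \<not> I \<subseteq> M"
  shows "\<exists>J S'. J \<notin> C \<and> finite (insert J C) \<and> pairwise (comaximal R) (insert J C)
     \<and> (\<forall>I\<in>insert J C. \<exists>G. finite G \<and> G \<subseteq> carrier R \<and> I = Idl (Fa \<union> G))
     \<and> infinite S' \<and> (\<forall>M\<in>S'. maximalideal M R \<and> Fa \<subseteq> M) \<and> (\<forall>I\<in>insert J C. \<forall>M\<in>S'. \<not> I \<subseteq> M)"
proof -
  obtain M x where Mx: "M \<in> S" "x \<in> M" "infinite {M'\<in>S. x \<notin> M'}"
    using split_max[OF S(1)] S(2) by blast
  have mx: "maximalideal M R" and FaM: "Fa \<subseteq> M" using S(2) Mx by auto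
  have MI: "ideal M R" using maximalideal.axioms(1)[OF mx] .
  have Mc: "M \<subseteq> carrier R" using ideal_sub[OF MI] .
  have IC: "ideal I R" if "I \<in> C" for I
  proof -
    have "\<exists>G. finite G \<and> G \<subseteq> carrier R \<and> I = Idl (Fa \<union> G)" using C(3) that by (rule bspec)
    then obtain G where G: "finite G \<and> G \<subseteq> carrier R \<and> I = Idl (Fa \<union> G)" by (rule exE)
    have "Fa \<union> G \<subseteq> carrier R" using G Fa by simp
    then show ?thesis using genideal_ideal G by simp
  qed
  have "\<forall>I\<in>C. \<exists>v. v \<in> M \<and> (\<exists>u\<in>I. u \<oplus> v = \<one>)"
  proof
    fix I assume "I \<in> C"
    then show "\<exists>v. v \<in> M \<and> (\<exists>u\<in>I. u \<oplus> v = \<one>)"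
      using comax_elem[OF mx IC[OF \<open>I \<in> C\<close>]] S(3) Mx(1) by blast
  qed
  then obtain mm where mm: "\<And>I. I \<in> C \<Longrightarrow> mm I \<in> M \<and> (\<exists>u\<in>I. u \<oplus> mm I = \<one>)"
    by metis
  define G where "G = insert x (mm ` C)"
  define J where "J = Idl (Fa \<union> G)"
  have Gf: "finite G" using C(1) by (simp add: G_def)
  have GM: "G \<subseteq> M" using mm Mx by (auto simp: G_def)
  have Gc: "G \<subseteq> carrier R" using GM Mc by blast
  have FGc: "Fa \<union> G \<subseteq> carrier R" using Fa Gc by simp
  have JI: "ideal J R" unfolding J_def by (rule genideal_ideal[OF FGc])
  have "Fa \<union> G \<subseteq> M" using FaM GM by simp
  then have JM: "J \<subseteq> M" unfolding J_def by (rule genideal_minimal[OF MI])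
  have selfJ: "Fa \<union> G \<subseteq> J" unfolding J_def by (rule genideal_self[OF FGc])
  have xJ: "x \<in> J" using selfJ by (auto simp: G_def)
  have JnC: "J \<notin> C" using JM S(3) Mx(1) by blast
  have comax: "comaximal R J I \<and> comaximal R I J" if IinC: "I \<in> C" for I
  proof -
    obtain u where u: "u \<in> I" "u \<oplus> mm I = \<one>" using mm[OF IinC] by blast
    have mmJ: "mm I \<in> J" using selfJ IinC by (auto simp: G_def)
    have uc: "u \<in> carrier R" by (rule ideal.Icarr[OF IC[OF IinC] u(1)])
    have mc: "mm I \<in> carrier R" by (rule ideal.Icarr[OF JI mmJ])
    have "\<one> \<in> I <+> J" using u mmJ unfolding set_add_def' by force
    then have 1: "I <+> J = carrier R"
      using ideal.one_imp_carrier[OF add_ideals[OF IC[OF IinC] JI]] by blast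
    have "mm I \<oplus> u = \<one>" using u uc mc a_comm by metis
    then have "\<one> \<in> J <+> I" using u mmJ unfolding set_add_def' by force
    then have 2: "J <+> I = carrier R"
      using ideal.one_imp_carrier[OF add_ideals[OF JI IC[OF IinC]]] by blast
    show ?thesis using 1 2 by (simp add: comaximal_def)
  qed
  define S' where "S' = {M'\<in>S. x \<notin> M'}"
  show ?thesis
  proof (intro exI conjI)
    show "J \<notin> C" by fact
    show "finite (insert J C)" using C(1) by simp
    show "pairwise (comaximal R) (insert J C)"
      using C(2) comax by (auto simp: pairwise_insert)
    show "\<forall>I\<in>insert J C. \<exists>G. finite G \<and> G \<subseteq> carrier R \<and> I = Idl (Fa \<union> G)"
    proof
      fix I assume I: "I \<in> insert J C"
      show "\<exists>G. finite G \<and> G \<subseteq> carrier R \<and> I = Idl (Fa \<union> G)"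
      proof (cases "I = J")
        case True then show ?thesis using Gf Gc by (intro exI[of _ G]) (simp add: J_def)
      next
        case False then have "I \<in> C" using I by simp
        then show ?thesis using C(3) by simp
      qed
    qed
    show "infinite S'" using Mx(3) by (simp add: S'_def)
    show "\<forall>M\<in>S'. maximalideal M R \<and> Fa \<subseteq> M" using S(2) by (auto simp: S'_def)
    show "\<forall>I\<in>insert J C. \<forall>M\<in>S'. \<not> I \<subseteq> M" using S(3) xJ by (auto simp: S'_def)
  qed
qed


lemma (in cring) infinite_comax_family:
  assumes Fa: "Fa \<subseteq> carrier R" and inf: "infinite {M. maximalideal M R \<and> Fa \<subseteq> M}"
  shows "\<exists>CC. infinite CC \<and> pairwise (comaximal R) CC
     \<and> (\<forall>I\<in>CC. \<exists>G. finite G \<and> G \<subseteq> carrier R \<and> I = Idl (Fa \<union> G))"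
proof -
  define Inv where "Inv = (\<lambda>p::('a set set \<times> 'a set set). finite (fst p) \<and> pairwise (comaximal R) (fst p)
     \<and> (\<forall>I\<in>fst p. \<exists>G. finite G \<and> G \<subseteq> carrier R \<and> I = Idl (Fa \<union> G))
     \<and> infinite (snd p) \<and> (\<forall>M\<in>snd p. maximalideal M R \<and> Fa \<subseteq> M)
     \<and> (\<forall>I\<in>fst p. \<forall>M\<in>snd p. \<not> I \<subseteq> M))"
  define Q where "Q = (\<lambda>(p::'a set set \<times> 'a set set) (q::'a set set \<times> 'a set set). Inv q \<and> (\<exists>J. J \<notin> fst p \<and> fst q = insert J (fst p)))"
  have stepQ: "\<exists>q. Q p q" if inv: "Inv p" for p
  proof -
    have i1: "finite (fst p)" and i2: "pairwise (comaximal R) (fst p)"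
      and i3: "\<forall>I\<in>fst p. \<exists>G. finite G \<and> G \<subseteq> carrier R \<and> I = Idl (Fa \<union> G)"
      and i4: "infinite (snd p)" and i5: "\<forall>M\<in>snd p. maximalideal M R \<and> Fa \<subseteq> M"
      and i6: "\<forall>I\<in>fst p. \<forall>M\<in>snd p. \<not> I \<subseteq> M"
      using inv unfolding Inv_def by simp_all
    have "\<exists>J S'. J \<notin> fst p \<and> finite (insert J (fst p)) \<and> pairwise (comaximal R) (insert J (fst p))
     \<and> (\<forall>I\<in>insert J (fst p). \<exists>G. finite G \<and> G \<subseteq> carrier R \<and> I = Idl (Fa \<union> G))
     \<and> infinite S' \<and> (\<forall>M\<in>S'. maximalideal M R \<and> Fa \<subseteq> M) \<and> (\<forall>I\<in>insert J (fst p). \<forall>M\<in>S'. \<not> I \<subseteq> M)"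
      by (rule step_lemma[OF Fa i1 i2 i3 i4 i5 i6])
    then obtain J S' where JS: "J \<notin> fst p \<and> finite (insert J (fst p)) \<and> pairwise (comaximal R) (insert J (fst p))
     \<and> (\<forall>I\<in>insert J (fst p). \<exists>G. finite G \<and> G \<subseteq> carrier R \<and> I = Idl (Fa \<union> G))
     \<and> infinite S' \<and> (\<forall>M\<in>S'. maximalideal M R \<and> Fa \<subseteq> M) \<and> (\<forall>I\<in>insert J (fst p). \<forall>M\<in>S'. \<not> I \<subseteq> M)"
      by (elim exE) (erule that)
    have q1: "Inv (insert J (fst p), S')" using JS unfolding Inv_def by simp
    have q2: "\<exists>J'. J' \<notin> fst p \<and> fst (insert J (fst p), S') = insert J' (fst p)"
      using JS by (intro exI[of _ J]) simp
    have "Q p (insert J (fst p), S')" unfolding Q_def using q1 q2 by simp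
    then show ?thesis by (rule exI)
  qed
  define f where "f = rec_nat ({}, {M. maximalideal M R \<and> Fa \<subseteq> M}) (\<lambda>_ p. SOME q. Q p q)"
  have f0: "f 0 = ({}, {M. maximalideal M R \<and> Fa \<subseteq> M})" by (simp add: f_def)
  have fS: "f (Suc n) = (SOME q. Q (f n) q)" for n by (simp add: f_def)
  have invf: "Inv (f n)" for n
  proof (induction n)
    case 0 then show ?case using inf by (simp add: f0 Inv_def)
  next
    case (Suc n)
    then have "Q (f n) (SOME q. Q (f n) q)" using stepQ someI_ex by metis
    then show ?case by (simp add: fS Q_def)
  qed
  have Qn: "Q (f n) (f (Suc n))" for n using stepQ[OF invf[of n]] someI_ex fS by metis
  have card: "card (fst (f n)) = n" for n
  proof (induction n)
    case 0 then show ?case by (simp add: f0)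
  next
    case (Suc n)
    obtain J where "J \<notin> fst (f n)" "fst (f (Suc n)) = insert J (fst (f n))"
      using Qn[of n] unfolding Q_def by blast
    moreover have "finite (fst (f n))" using invf[of n] by (simp add: Inv_def)
    ultimately show ?case using Suc by simp
  qed
  have mono1: "fst (f n) \<subseteq> fst (f (Suc n))" for n using Qn[of n] unfolding Q_def by blast
  have mono: "m \<le> n \<Longrightarrow> fst (f m) \<subseteq> fst (f n)" for m n
    using lift_Suc_mono_le[of "\<lambda>n. fst (f n)", OF mono1] by blast
  define CC where "CC = (\<Union>n. fst (f n))"
  have "infinite CC"
  proof
    assume fin: "finite CC"
    have "fst (f (Suc (card CC))) \<subseteq> CC" by (auto simp: CC_def)
    then have "card (fst (f (Suc (card CC)))) \<le> card CC" using card_mono fin by blast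
    then show False using card by simp
  qed
  moreover have "pairwise (comaximal R) CC"
    unfolding pairwise_def
  proof (intro ballI impI)
    fix x y assume "x \<in> CC" "y \<in> CC" "x \<noteq> y"
    then obtain n m where "x \<in> fst (f n)" "y \<in> fst (f m)" by (auto simp: CC_def)
    then have "x \<in> fst (f (max n m))" "y \<in> fst (f (max n m))" using mono by (meson max.cobounded1 max.cobounded2 subsetD)+
    then show "comaximal R x y" using invf[of "max n m"] \<open>x \<noteq> y\<close> by (simp add: Inv_def pairwise_def)
  qed
  moreover have "\<forall>I\<in>CC. \<exists>G. finite G \<and> G \<subseteq> carrier R \<and> I = Idl (Fa \<union> G)"
    using invf by (auto simp: CC_def Inv_def)
  ultimately show ?thesis by blast
qed

lemma Breg_mono:
  assumes "ring R" "B_regular R I" "I \<subseteq> J" "J \<subseteq> carrier R"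
  shows "B_regular R J"
proof -
  interpret ring R by fact
  have "genideal R I \<subseteq> genideal R J" using subset_Idl_subset assms by blast
  moreover have "genideal R J \<subseteq> carrier R" using ideal_sub[OF genideal_ideal[OF assms(4)]] .
  ultimately show ?thesis using assms(2) by (auto simp: B_regular_def)
qed

theorem corollary3p3:
  fixes R :: "('a, 'b) ring_scheme" and A :: "'a set"
  assumes "cring R" and "subring A R"
  shows "finite_character R A \<longleftrightarrow>
    (\<forall>\<aa>. ideal \<aa> (R\<lparr>carrier := A\<rparr>) \<and> fin_gen_ideal (R\<lparr>carrier := A\<rparr>) \<aa> \<and> B_regular R \<aa> \<longrightarrow>
       (\<forall>\<C>. (\<forall>I\<in>\<C>. ideal I (R\<lparr>carrier := A\<rparr>) \<and> fin_gen_ideal (R\<lparr>carrier := A\<rparr>) I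
                     \<and> B_regular R I \<and> \<aa> \<subseteq> I)
            \<and> pairwise (comaximal (R\<lparr>carrier := A\<rparr>)) \<C>
            \<longrightarrow> finite \<C>))"
proof -
  interpret R: cring R by fact
  have Ac: "A \<subseteq> carrier R" using subringE(1)[OF assms(2)] .
  have cRa: "cring (R\<lparr>carrier := A\<rparr>)"
    using R.subcring_iff[OF Ac] R.subcringI'[OF assms(2)] by blast
  interpret Ra: cring "R\<lparr>carrier := A\<rparr>" by (rule cRa)
  have ringR: "ring R" by (rule R.ring_axioms)
  show ?thesis
  proof
    assume FC: "finite_character R A"
    show "\<forall>\<aa>. ideal \<aa> (R\<lparr>carrier := A\<rparr>) \<and> fin_gen_ideal (R\<lparr>carrier := A\<rparr>) \<aa> \<and> B_regular R \<aa> \<longrightarrow>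
       (\<forall>\<C>. (\<forall>I\<in>\<C>. ideal I (R\<lparr>carrier := A\<rparr>) \<and> fin_gen_ideal (R\<lparr>carrier := A\<rparr>) I
                     \<and> B_regular R I \<and> \<aa> \<subseteq> I)
            \<and> pairwise (comaximal (R\<lparr>carrier := A\<rparr>)) \<C>
            \<longrightarrow> finite \<C>)"
    proof (intro allI impI)
      fix aa CC
      assume aa: "ideal aa (R\<lparr>carrier := A\<rparr>) \<and> fin_gen_ideal (R\<lparr>carrier := A\<rparr>) aa \<and> B_regular R aa"
      assume H: "(\<forall>I\<in>CC. ideal I (R\<lparr>carrier := A\<rparr>) \<and> fin_gen_ideal (R\<lparr>carrier := A\<rparr>) I
                     \<and> B_regular R I \<and> aa \<subseteq> I) \<and> pairwise (comaximal (R\<lparr>carrier := A\<rparr>)) CC"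
      have H1: "\<And>I. I \<in> CC \<Longrightarrow> ideal I (R\<lparr>carrier := A\<rparr>) \<and> aa \<subseteq> I" using H by blast
      have H2: "pairwise (comaximal (R\<lparr>carrier := A\<rparr>)) CC" using H by blast
      let ?MS = "{M. maximalideal M (R\<lparr>carrier := A\<rparr>) \<and> aa \<subseteq> M}"
      have finMS: "finite ?MS" using FC aa unfolding finite_character_def by blast
      have "\<forall>I\<in>CC - {A}. \<exists>M. maximalideal M (R\<lparr>carrier := A\<rparr>) \<and> I \<subseteq> M"
      proof
        fix I assume I: "I \<in> CC - {A}"
        then have "ideal I (R\<lparr>carrier := A\<rparr>)" using H1 by blast
        moreover have "I \<noteq> carrier (R\<lparr>carrier := A\<rparr>)" using I by simp
        ultimately show "\<exists>M. maximalideal M (R\<lparr>carrier := A\<rparr>) \<and> I \<subseteq> M"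
          using Ra.exists_maximal[of I] by blast
      qed
      then obtain g where g: "\<And>I. I \<in> CC - {A} \<Longrightarrow> maximalideal (g I) (R\<lparr>carrier := A\<rparr>) \<and> I \<subseteq> g I"
        by metis
      have img: "g ` (CC - {A}) \<subseteq> ?MS"
      proof
        fix M assume "M \<in> g ` (CC - {A})"
        then obtain I where "I \<in> CC - {A}" "M = g I" by blast
        then show "M \<in> ?MS" using g[of I] H1[of I] by blast
      qed
      have inj: "inj_on g (CC - {A})"
      proof (rule inj_onI)
        fix I1 I2 assume I: "I1 \<in> CC - {A}" "I2 \<in> CC - {A}" "g I1 = g I2"
        show "I1 = I2"
        proof (rule ccontr)
          assume ne: "I1 \<noteq> I2"
          let ?M = "g I1"
          have mx: "maximalideal ?M (R\<lparr>carrier := A\<rparr>)" using g I by blast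
          have MI: "ideal ?M (R\<lparr>carrier := A\<rparr>)" using maximalideal.axioms(1)[OF mx] .
          have sub: "I1 \<subseteq> ?M" "I2 \<subseteq> ?M" using g I by auto
          have "comaximal (R\<lparr>carrier := A\<rparr>) I1 I2" using H2 I ne unfolding pairwise_def by blast
          then have eq: "I1 <+>\<^bsub>R\<lparr>carrier := A\<rparr>\<^esub> I2 = A" by (simp add: comaximal_def)
          have "I1 <+>\<^bsub>R\<lparr>carrier := A\<rparr>\<^esub> I2 \<subseteq> ?M"
            unfolding set_add_def' using sub additive_subgroup.a_closed[OF ideal.axioms(1)[OF MI]] by blast
          then have "?M = A" using eq ideal_sub[OF MI] by auto
          then show False using maximalideal.I_notcarr[OF mx] by simp
        qed
      qed
      have "finite (CC - {A})" using inj_on_finite[OF inj img finMS] .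
      then show "finite CC" by simp
    qed
  next
    assume H: "\<forall>\<aa>. ideal \<aa> (R\<lparr>carrier := A\<rparr>) \<and> fin_gen_ideal (R\<lparr>carrier := A\<rparr>) \<aa> \<and> B_regular R \<aa> \<longrightarrow>
       (\<forall>\<C>. (\<forall>I\<in>\<C>. ideal I (R\<lparr>carrier := A\<rparr>) \<and> fin_gen_ideal (R\<lparr>carrier := A\<rparr>) I
                     \<and> B_regular R I \<and> \<aa> \<subseteq> I)
            \<and> pairwise (comaximal (R\<lparr>carrier := A\<rparr>)) \<C>
            \<longrightarrow> finite \<C>)"
    show "finite_character R A"
      unfolding finite_character_def
    proof (intro allI impI)
      fix I assume I: "ideal I (R\<lparr>carrier := A\<rparr>) \<and> B_regular R I"
      have IA: "I \<subseteq> A" using ideal_sub[of I "R\<lparr>carrier := A\<rparr>"] I by simp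
      have Ic: "I \<subseteq> carrier R" using IA Ac by blast
      have "\<one>\<^bsub>R\<^esub> \<in> genideal R I" using I by (simp add: B_regular_def)
      then obtain F where F: "finite F" "F \<subseteq> I" "\<one>\<^bsub>R\<^esub> \<in> genideal R F"
        using R.genideal_finite_elem[OF Ic] by blast
      have Fc: "F \<subseteq> carrier R" using F Ic by blast
      have FA: "F \<subseteq> A" using F IA by blast
      have BF: "B_regular R F" unfolding B_regular_def
        using ideal.one_imp_carrier[OF R.genideal_ideal[OF Fc] F(3)] .
      define aa where "aa = genideal (R\<lparr>carrier := A\<rparr>) F"
      have aaI: "ideal aa (R\<lparr>carrier := A\<rparr>)" unfolding aa_def using Ra.genideal_ideal FA by simp
      have Faa: "F \<subseteq> aa" unfolding aa_def using Ra.genideal_self FA by simp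
      have aaA: "aa \<subseteq> A" using ideal_sub[OF aaI] by simp
      have aafg: "fin_gen_ideal (R\<lparr>carrier := A\<rparr>) aa" unfolding fin_gen_ideal_def aa_def
        using F FA by auto
      have aaB: "B_regular R aa" using Breg_mono[OF ringR BF Faa] aaA Ac by blast
      show "finite {M. maximalideal M (R\<lparr>carrier := A\<rparr>) \<and> I \<subseteq> M}"
      proof (rule ccontr)
        assume inf: "infinite {M. maximalideal M (R\<lparr>carrier := A\<rparr>) \<and> I \<subseteq> M}"
        have "{M. maximalideal M (R\<lparr>carrier := A\<rparr>) \<and> I \<subseteq> M} \<subseteq> {M. maximalideal M (R\<lparr>carrier := A\<rparr>) \<and> F \<subseteq> M}"
          using F by blast
        then have inf2: "infinite {M. maximalideal M (R\<lparr>carrier := A\<rparr>) \<and> F \<subseteq> M}"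
          using inf finite_subset by blast
        obtain CC where CC: "infinite CC" "pairwise (comaximal (R\<lparr>carrier := A\<rparr>)) CC"
          "\<forall>I\<in>CC. \<exists>G. finite G \<and> G \<subseteq> carrier (R\<lparr>carrier := A\<rparr>) \<and> I = genideal (R\<lparr>carrier := A\<rparr>) (F \<union> G)"
          using Ra.infinite_comax_family[of F] FA inf2 by auto
        have "\<forall>J\<in>CC. ideal J (R\<lparr>carrier := A\<rparr>) \<and> fin_gen_ideal (R\<lparr>carrier := A\<rparr>) J
                     \<and> B_regular R J \<and> aa \<subseteq> J"
        proof
          fix J assume "J \<in> CC"
          then obtain G where G: "finite G" "G \<subseteq> A" "J = genideal (R\<lparr>carrier := A\<rparr>) (F \<union> G)"
            using CC(3) by auto
          have FGA: "F \<union> G \<subseteq> A" using G FA by blast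
          have JI: "ideal J (R\<lparr>carrier := A\<rparr>)" using Ra.genideal_ideal FGA G by simp
          have fg: "fin_gen_ideal (R\<lparr>carrier := A\<rparr>) J" unfolding fin_gen_ideal_def
            using G F FGA by auto
          have aaJ: "aa \<subseteq> J" unfolding aa_def G(3) using Ra.subset_Idl_subset FGA by simp
          have JA: "J \<subseteq> A" using ideal_sub[OF JI] by simp
          have "B_regular R J" using Breg_mono[OF ringR aaB aaJ] JA Ac by blast
          then show "ideal J (R\<lparr>carrier := A\<rparr>) \<and> fin_gen_ideal (R\<lparr>carrier := A\<rparr>) J
                     \<and> B_regular R J \<and> aa \<subseteq> J" using JI fg aaJ by blast
        qed
        then have "finite CC" using H[rule_format, of aa CC] aaI aafg aaB CC(2) by blast
        then show False using CC(1) by blast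
      qed
    qed
  qed
qed

end
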